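(* Let $(M,g)$ be a Riemannian manifold with positive curvature operator and let $f$ be a smooth function on $M$. Then pointwise on $M$, $$R_{ijkl}R_{ik}f_jf_l\ge 0.$$
   Context: All tensors are written in components with respect to local orthonormal frames, with repeated indices summed. $R_{ijkl}$ is the Riemann curvature tensor, normalized so that $R_{ijij}$ is the sectional curvature of the plane spanned by $e_i,e_j$, and the Ricci tensor is $R_{jk}=R_{ijik}$; $f_i=\nabla_if$. The curvature operator is the symmetric operator on $2$-forms whose quadratic form is $\omega\mapsto R_{ikjl}\omega_{ik}\omega_{jl}$; "positive" means this form is positive definite. *)

theory Defs
  imports Complex_Main
begin

text \<open>Pointwise (algebraic) setting: components of tensors with respect to an
orthonormal frame of the tangent space at a point, indexed by a finite type 'n
(dimension = CARD('n)).\<close>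

definition algebraic_curvature_tensor :: "('n::finite \<Rightarrow> 'n \<Rightarrow> 'n \<Rightarrow> 'n \<Rightarrow> real) \<Rightarrow> bool" where
  "algebraic_curvature_tensor R \<longleftrightarrow>
     (\<forall>i j k l. R i j k l = - R j i k l) \<and>
     (\<forall>i j k l. R i j k l = - R i j l k) \<and>
     (\<forall>i j k l. R i j k l = R k l i j) \<and>
     (\<forall>i j k l. R i j k l + R j k i l + R k i j l = 0)"

definition ricci :: "('n::finite \<Rightarrow> 'n \<Rightarrow> 'n \<Rightarrow> 'n \<Rightarrow> real) \<Rightarrow> 'n \<Rightarrow> 'n \<Rightarrow> real" where
  "ricci R j k = (\<Sum>i\<in>UNIV. R i j i k)"

definition positive_curvature_operator :: "('n::finite \<Rightarrow> 'n \<Rightarrow> 'n \<Rightarrow> 'n \<Rightarrow> real) \<Rightarrow> bool" where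
  "positive_curvature_operator R \<longleftrightarrow>
     (\<forall>\<omega> :: 'n \<Rightarrow> 'n \<Rightarrow> real. (\<forall>i j. \<omega> i j = - \<omega> j i) \<and> \<omega> \<noteq> (\<lambda>i j. 0) \<longrightarrow>
        (\<Sum>i\<in>UNIV. \<Sum>k\<in>UNIV. \<Sum>j\<in>UNIV. \<Sum>l\<in>UNIV. R i k j l * \<omega> i k * \<omega> j l) > 0)"

end

theory Submission
  imports Defs
begin

definition Qf :: "('n::finite \<Rightarrow> 'n \<Rightarrow> real) \<Rightarrow> ('n \<Rightarrow> real) \<Rightarrow> real" where
  "Qf A x = (\<Sum>i\<in>UNIV. \<Sum>k\<in>UNIV. A i k * x i * x k)"

definition ev :: "'n \<Rightarrow> 'n \<Rightarrow> real" where "ev m = (\<lambda>i. if i = m then 1 else 0)"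

lemma Qf_shift:
  fixes A :: "'n::finite \<Rightarrow> 'n \<Rightarrow> real"
  assumes sym: "\<And>i k. A i k = A k i"
  shows "Qf A (\<lambda>i. x i + s * ev m i) = Qf A x + 2 * s * (\<Sum>i\<in>UNIV. A i m * x i) + s^2 * A m m"
proof -
  have "Qf A (\<lambda>i. x i + s * ev m i) = Qf A x + s * (\<Sum>i\<in>UNIV. \<Sum>k\<in>UNIV. A i k * x i * ev m k)
     + s * (\<Sum>i\<in>UNIV. \<Sum>k\<in>UNIV. A i k * ev m i * x k) + s^2 * (\<Sum>i\<in>UNIV. \<Sum>k\<in>UNIV. A i k * ev m i * ev m k)"
    unfolding Qf_def by (simp add: algebra_simps sum.distrib sum_distrib_left power2_eq_square)
  also have "(\<Sum>i\<in>UNIV. \<Sum>k\<in>UNIV. A i k * x i * ev m k) = (\<Sum>i\<in>UNIV. A i m * x i)"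
    by (simp add: ev_def if_distrib cong: if_cong)
  also have "(\<Sum>i\<in>UNIV. \<Sum>k\<in>UNIV. A i k * ev m i * x k) = (\<Sum>i\<in>UNIV. A i m * x i)"
  proof -
    have "\<And>i k. A i k * ev m i * x k = (if i = m then A k m * x k else 0)"
      by (simp add: ev_def sym)
    then show ?thesis by (simp, subst sum.swap, simp)
  qed
  also have "(\<Sum>i\<in>UNIV. \<Sum>k\<in>UNIV. A i k * ev m i * ev m k) = A m m"
  proof -
    have "\<And>i k. A i k * ev m i * ev m k = (if k = m then (if i = m then A m m else 0) else 0)"
      by (simp add: ev_def)
    then show ?thesis by simp
  qed
  finally show ?thesis by simp
qed

lemma Qf_ev: "Qf A (ev m) = A m m" if "\<And>i k. A i k = A k i"
  using Qf_shift[of A "\<lambda>_. 0" 1 m] that by (simp add: Qf_def)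

lemma frob_aux:
  fixes B :: "'n::finite \<Rightarrow> 'n \<Rightarrow> real"
  assumes symB: "\<And>i k. B i k = B k i" and psdB: "\<And>x. Qf B x \<ge> 0"
  shows "finite S \<Longrightarrow> \<forall>A. (\<forall>i k. A i k = A k i) \<and> (\<forall>x. Qf A x \<ge> 0) \<and> (\<forall>i k. i \<notin> S \<or> k \<notin> S \<longrightarrow> A i k = 0)
      \<longrightarrow> (\<Sum>i\<in>UNIV. \<Sum>k\<in>UNIV. A i k * B i k) \<ge> 0"
proof (induction S rule: finite_induct)
  case empty
  then show ?case by simp
next
  case (insert m S)
  show ?case
  proof (intro allI impI)
    fix A :: "'n \<Rightarrow> 'n \<Rightarrow> real"
    assume H: "(\<forall>i k. A i k = A k i) \<and> (\<forall>x. Qf A x \<ge> 0) \<and> (\<forall>i k. i \<notin> insert m S \<or> k \<notin> insert m S \<longrightarrow> A i k = 0)"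
    have symA: "\<And>i k. A i k = A k i" and psdA: "\<And>x. Qf A x \<ge> 0"
      and supp: "\<And>i k. i \<notin> insert m S \<or> k \<notin> insert m S \<Longrightarrow> A i k = 0" using H by auto
    have Amm: "A m m \<ge> 0" using psdA[of "ev m"] Qf_ev[of A m] symA by simp
    show "(\<Sum>i\<in>UNIV. \<Sum>k\<in>UNIV. A i k * B i k) \<ge> 0"
    proof (cases "A m m = 0")
      case True
      have col: "A j m = 0" for j
      proof (rule ccontr)
        assume nz: "A j m \<noteq> 0"
        define q where "q = Qf A (ev j)"
        have lin: "(\<Sum>i\<in>UNIV. A i m * ev j i) = A j m"
        proof -
          have "\<And>i. A i m * ev j i = (if i = j then A j m else 0)" by (simp add: ev_def)
          then show ?thesis by simp
        qed
        define s where "s = - (q + 1) / (2 * A j m)"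
        have "Qf A (\<lambda>i. ev j i + s * ev m i) = q + 2 * s * A j m"
          using Qf_shift[of A "ev j" s m] symA True lin q_def by simp
        also have "\<dots> = -1" using nz by (simp add: s_def field_simps)
        finally show False using psdA[of "\<lambda>i. ev j i + s * ev m i"] by simp
      qed
      have "\<forall>i k. i \<notin> S \<or> k \<notin> S \<longrightarrow> A i k = 0"
      proof (intro allI impI)
        fix i k assume "i \<notin> S \<or> k \<notin> S"
        then show "A i k = 0" using supp[of i k] col symA by (cases "i = m"; cases "k = m"; auto)
      qed
      then show ?thesis using insert.IH symA psdA by blast
    next
      case False
      with Amm have Ap: "A m m > 0" by simp
      define a where "a i = A i m" for i
      define A' where "A' i k = A i k - a i * a k / A m m" for i k
      have symA': "\<forall>i k. A' i k = A' k i" unfolding A'_def using symA by (simp add: mult.commute)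
      have QA': "Qf A' x = Qf A x - (\<Sum>i\<in>UNIV. a i * x i)^2 / A m m" for x
      proof -
        have "Qf A' x = Qf A x - (\<Sum>i\<in>UNIV. \<Sum>k\<in>UNIV. (a i * x i) * (a k * x k)) / A m m"
          unfolding Qf_def A'_def by (simp add: algebra_simps sum_subtractf sum_divide_distrib)
        also have "(\<Sum>i\<in>UNIV. \<Sum>k\<in>UNIV. (a i * x i) * (a k * x k)) = (\<Sum>i\<in>UNIV. a i * x i)^2"
          by (simp add: power2_eq_square sum_product)
        finally show ?thesis .
      qed
      have psdA': "\<forall>x. Qf A' x \<ge> 0"
      proof
        fix x
        define c where "c = (\<Sum>i\<in>UNIV. a i * x i)"
        have "Qf A (\<lambda>i. x i + (- c / A m m) * ev m i) = Qf A x + 2 * (- c / A m m) * c + (- c / A m m)^2 * A m m"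
          using Qf_shift[of A x "- c / A m m" m] symA by (simp add: c_def a_def mult.commute)
        also have "\<dots> = Qf A' x" using QA'[of x] Ap by (simp add: c_def field_simps power2_eq_square)
        finally show "Qf A' x \<ge> 0" using psdA by metis
      qed
      have suppA': "\<forall>i k. i \<notin> S \<or> k \<notin> S \<longrightarrow> A' i k = 0"
      proof (intro allI impI)
        fix i k assume ik: "i \<notin> S \<or> k \<notin> S"
        have a0: "j \<notin> insert m S \<Longrightarrow> a j = 0" for j using supp a_def by simp
        show "A' i k = 0"
        proof (cases "i = m")
          case True
          then show ?thesis using Ap symA by (simp add: A'_def a_def)
        next
          case F1: False
          show ?thesis
          proof (cases "k = m")
            case True
            then show ?thesis using Ap symA by (simp add: A'_def a_def)
          next
            case False
            then show ?thesis using F1 ik supp a0 by (auto simp: A'_def)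
          qed
        qed
      qed
      have IHr: "(\<Sum>i\<in>UNIV. \<Sum>k\<in>UNIV. A' i k * B i k) \<ge> 0"
        using insert.IH symA' psdA' suppA' by blast
      have "(\<Sum>i\<in>UNIV. \<Sum>k\<in>UNIV. A i k * B i k) = (\<Sum>i\<in>UNIV. \<Sum>k\<in>UNIV. A' i k * B i k) + Qf B a / A m m"
        unfolding Qf_def A'_def by (simp add: algebra_simps sum.distrib sum_subtractf sum_divide_distrib)
      moreover have "Qf B a / A m m \<ge> 0" using psdB[of a] Ap by simp
      ultimately show ?thesis using IHr by linarith
    qed
  qed
qed

lemma frob:
  fixes A B :: "'n::finite \<Rightarrow> 'n \<Rightarrow> real"
  assumes "\<And>i k. A i k = A k i" "\<And>x. Qf A x \<ge> 0" "\<And>i k. B i k = B k i" "\<And>x. Qf B x \<ge> 0"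
  shows "(\<Sum>i\<in>UNIV. \<Sum>k\<in>UNIV. A i k * B i k) \<ge> 0"
  using frob_aux[of B UNIV] assms by auto

definition Bf :: "('n::finite \<Rightarrow> 'n \<Rightarrow> 'n \<Rightarrow> 'n \<Rightarrow> real) \<Rightarrow> ('n \<Rightarrow> 'n \<Rightarrow> real) \<Rightarrow> ('n \<Rightarrow> 'n \<Rightarrow> real) \<Rightarrow> real" where
  "Bf R \<alpha> \<beta> = (\<Sum>i\<in>UNIV. \<Sum>k\<in>UNIV. \<Sum>j\<in>UNIV. \<Sum>l\<in>UNIV. R i k j l * \<alpha> i k * \<beta> j l)"

definition Tf :: "('n::finite \<Rightarrow> 'n \<Rightarrow> 'n \<Rightarrow> 'n \<Rightarrow> real) \<Rightarrow> ('n \<Rightarrow> real) \<Rightarrow> 'n \<Rightarrow> 'n \<Rightarrow> real" where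
  "Tf R f i k = (\<Sum>j\<in>UNIV. \<Sum>l\<in>UNIV. R i j k l * f j * f l)"

lemma Bf_diff1: "Bf R (\<lambda>i k. \<alpha> i k - \<gamma> i k) \<beta> = Bf R \<alpha> \<beta> - Bf R \<gamma> \<beta>"
  unfolding Bf_def by (simp add: algebra_simps sum_subtractf)

lemma Bf_diff2: "Bf R \<alpha> (\<lambda>i k. \<beta> i k - \<gamma> i k) = Bf R \<alpha> \<beta> - Bf R \<alpha> \<gamma>"
  unfolding Bf_def by (simp add: algebra_simps sum_subtractf)

lemma Bf_tr1:
  assumes "algebraic_curvature_tensor R"
  shows "Bf R (\<lambda>i k. \<alpha> k i) \<beta> = - Bf R \<alpha> \<beta>"
proof -
  have a: "R i k j l = - R k i j l" for i k j l using assms unfolding algebraic_curvature_tensor_def by blast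
  have "Bf R (\<lambda>i k. \<alpha> k i) \<beta> = (\<Sum>k\<in>UNIV. \<Sum>i\<in>UNIV. \<Sum>j\<in>UNIV. \<Sum>l\<in>UNIV. R i k j l * \<alpha> k i * \<beta> j l)"
    unfolding Bf_def by (rule sum.swap)
  also have "\<dots> = - Bf R \<alpha> \<beta>" unfolding Bf_def
    by (subst a) (simp add: sum_negf)
  finally show ?thesis .
qed

lemma Bf_tr2:
  assumes "algebraic_curvature_tensor R"
  shows "Bf R \<alpha> (\<lambda>i k. \<beta> k i) = - Bf R \<alpha> \<beta>"
proof -
  have a: "R i k j l = - R i k l j" for i k j l using assms unfolding algebraic_curvature_tensor_def by blast
  have "Bf R \<alpha> (\<lambda>i k. \<beta> k i) = (\<Sum>i\<in>UNIV. \<Sum>k\<in>UNIV. \<Sum>l\<in>UNIV. \<Sum>j\<in>UNIV. R i k j l * \<alpha> i k * \<beta> l j)"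
    unfolding Bf_def by (intro sum.cong refl sum.swap)
  also have "\<dots> = - Bf R \<alpha> \<beta>" unfolding Bf_def
    by (subst a) (simp add: sum_negf)
  finally show ?thesis .
qed

lemma Bf_nonneg:
  assumes "positive_curvature_operator R" "\<And>i j. \<omega> i j = - \<omega> j i"
  shows "Bf R \<omega> \<omega> \<ge> 0"
proof (cases "\<omega> = (\<lambda>i j. 0)")
  case True then show ?thesis by (simp add: Bf_def)
next
  case False
  have "Bf R \<omega> \<omega> > 0" using assms(1) assms(2) False unfolding positive_curvature_operator_def Bf_def
    by blast
  then show ?thesis by simp
qed

lemma psdT:
  assumes acs: "algebraic_curvature_tensor R" and pco: "positive_curvature_operator R"
  shows "Qf (Tf R f) v \<ge> 0"
proof -
  define \<alpha> where "\<alpha> i k = v i * f k" for i k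
  define \<omega> where "\<omega> i k = \<alpha> i k - \<alpha> k i" for i k
  have "Bf R \<omega> \<omega> \<ge> 0" using Bf_nonneg[OF pco, of \<omega>] by (simp add: \<omega>_def)
  moreover have "Bf R \<omega> \<omega> = 4 * Bf R \<alpha> \<alpha>"
  proof -
    define \<alpha>t where "\<alpha>t = (\<lambda>i k. \<alpha> k i)"
    have e: "\<omega> = (\<lambda>i k. \<alpha> i k - \<alpha>t i k)" by (simp add: \<omega>_def \<alpha>t_def fun_eq_iff)
    have 1: "Bf R \<omega> \<omega> = Bf R \<alpha> \<omega> - Bf R \<alpha>t \<omega>"
      by (subst (1) e, rule Bf_diff1)
    have 2: "Bf R \<alpha>t \<omega> = - Bf R \<alpha> \<omega>"
      unfolding \<alpha>t_def by (rule Bf_tr1[OF acs])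
    have 3: "Bf R \<alpha> \<omega> = Bf R \<alpha> \<alpha> - Bf R \<alpha> \<alpha>t"
      by (subst (1) e, rule Bf_diff2)
    have 4: "Bf R \<alpha> \<alpha>t = - Bf R \<alpha> \<alpha>"
      unfolding \<alpha>t_def by (rule Bf_tr2[OF acs])
    show ?thesis using 1 2 3 4 by linarith
  qed
  moreover have "Bf R \<alpha> \<alpha> = Qf (Tf R f) v"
  proof -
    have "Qf (Tf R f) v = (\<Sum>i\<in>UNIV. \<Sum>j\<in>UNIV. \<Sum>k\<in>UNIV. \<Sum>l\<in>UNIV. R i k j l * \<alpha> i k * \<alpha> j l)"
      unfolding Qf_def Tf_def \<alpha>_def by (intro sum.cong refl) (simp add: sum_distrib_left mult_ac)
    also have "\<dots> = Bf R \<alpha> \<alpha>" unfolding Bf_def by (intro sum.cong refl sum.swap)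
    finally show ?thesis by simp
  qed
  ultimately show ?thesis by simp
qed

lemma Tf_ev:
  assumes acs: "algebraic_curvature_tensor R"
  shows "Tf R (ev p) i k = R p i p k"
proof -
  have "\<And>j l. R i j k l * ev p j * ev p l = (if l = p then (if j = p then R i p k p else 0) else 0)"
    by (simp add: ev_def)
  then have "Tf R (ev p) i k = R i p k p" unfolding Tf_def by simp
  also have "\<dots> = R p i p k" using acs unfolding algebraic_curvature_tensor_def by (metis minus_minus)
  finally show ?thesis .
qed

lemma Tf_sym:
  assumes acs: "algebraic_curvature_tensor R"
  shows "Tf R f i k = Tf R f k i"
proof -
  have ps: "R a b c d = R c d a b" for a b c d using acs unfolding algebraic_curvature_tensor_def by blast
  have "Tf R f k i = (\<Sum>j\<in>UNIV. \<Sum>l\<in>UNIV. R i l k j * f j * f l)"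
    unfolding Tf_def by (simp add: ps[of k _ i])
  also have "\<dots> = (\<Sum>l\<in>UNIV. \<Sum>j\<in>UNIV. R i l k j * f j * f l)" by (rule sum.swap)
  also have "\<dots> = Tf R f i k" unfolding Tf_def by (simp add: mult_ac)
  finally show ?thesis by simp
qed

lemma ric_sym:
  assumes acs: "algebraic_curvature_tensor R"
  shows "ricci R i k = ricci R k i"
proof -
  have ps: "R a b c d = R c d a b" for a b c d using acs unfolding algebraic_curvature_tensor_def by blast
  show ?thesis unfolding ricci_def by (simp add: ps[of _ i])
qed

lemma ric_psd:
  assumes acs: "algebraic_curvature_tensor R" and pco: "positive_curvature_operator R"
  shows "Qf (ricci R) v \<ge> 0"
proof -
  have "Qf (ricci R) v = (\<Sum>i\<in>UNIV. \<Sum>k\<in>UNIV. \<Sum>p\<in>UNIV. Tf R (ev p) i k * v i * v k)"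
    unfolding Qf_def ricci_def by (simp add: Tf_ev[OF acs] sum_distrib_right)
  also have "\<dots> = (\<Sum>i\<in>UNIV. \<Sum>p\<in>UNIV. \<Sum>k\<in>UNIV. Tf R (ev p) i k * v i * v k)"
    by (intro sum.cong refl sum.swap)
  also have "\<dots> = (\<Sum>p\<in>UNIV. \<Sum>i\<in>UNIV. \<Sum>k\<in>UNIV. Tf R (ev p) i k * v i * v k)"
    by (rule sum.swap)
  also have "\<dots> = (\<Sum>p\<in>UNIV. Qf (Tf R (ev p)) v)" unfolding Qf_def by simp
  finally show ?thesis using psdT[OF acs pco] by (simp add: sum_nonneg)
qed

theorem lemma5:
  fixes R :: "'n::finite \<Rightarrow> 'n \<Rightarrow> 'n \<Rightarrow> 'n \<Rightarrow> real" and df :: "'n \<Rightarrow> real"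
  assumes "algebraic_curvature_tensor R"
    and "positive_curvature_operator R"
  shows "(\<Sum>i\<in>UNIV. \<Sum>j\<in>UNIV. \<Sum>k\<in>UNIV. \<Sum>l\<in>UNIV.
            R i j k l * ricci R i k * df j * df l) \<ge> 0"
proof -
  have "(\<Sum>i\<in>UNIV. \<Sum>j\<in>UNIV. \<Sum>k\<in>UNIV. \<Sum>l\<in>UNIV. R i j k l * ricci R i k * df j * df l)
      = (\<Sum>i\<in>UNIV. \<Sum>k\<in>UNIV. \<Sum>j\<in>UNIV. \<Sum>l\<in>UNIV. R i j k l * ricci R i k * df j * df l)"
    by (intro sum.cong refl sum.swap)
  also have "\<dots> = (\<Sum>i\<in>UNIV. \<Sum>k\<in>UNIV. Tf R df i k * ricci R i k)"
    unfolding Tf_def by (intro sum.cong refl) (simp add: sum_distrib_left mult_ac)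
  also have "\<dots> \<ge> 0"
    by (rule frob) (auto intro: Tf_sym[OF assms(1)] ric_sym[OF assms(1)] psdT[OF assms] ric_psd[OF assms])
  finally show ?thesis .
qed

end
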